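(* Let $T:\mathrm{PSym}(3)\to\mathrm{Sym}(3)$ be continuous and isotropic (i.e. $T(Q^TUQ)=Q^TT(U)Q$ for all $Q\in\mathrm O(3)$, $U\in\mathrm{PSym}(3)$), such that $T(U)=0$ holds if and only if $U=\mathbb 1$, and such that $T(U_1U_2)=T(U_1)+T(U_2)$ for all commuting $U_1,U_2\in\mathrm{PSym}(3)$. Then there exist constants $G,\Lambda\in\mathbb R$ with $G\neq0$ and $3\Lambda+2G\neq0$ such that $$T(U)=2G\,\log U+\Lambda\,\mathrm{tr}(\log U)\,\mathbb 1\quad\text{for all }U\in\mathrm{PSym}(3),$$ equivalently constants $G,K\in\mathbb R\setminus\{0\}$ with $T(U)=2G\,\mathrm{dev}_3\log U+K\,\mathrm{tr}(\log U)\,\mathbb 1$.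
   Context: $\mathrm{Sym}(3)$: real symmetric $3\times3$ matrices; $\mathrm{PSym}(3)$: symmetric positive definite ones; $\mathbb 1$: identity; $\mathrm O(3)$: orthogonal group; $\log$: principal matrix logarithm $\mathrm{PSym}(3)\to\mathrm{Sym}(3)$; $\mathrm{dev}_3X=X-\tfrac13\mathrm{tr}(X)\mathbb 1$. *)

theory Defs
  imports "HOL-Analysis.Analysis"
begin

type_synonym mat3 = "real^3^3"

definition Sym3 :: "mat3 set" where
  "Sym3 = {A. transpose A = A}"

definition PSym3 :: "mat3 set" where
  "PSym3 = {A. transpose A = A \<and> (\<forall>x::real^3. x \<noteq> 0 \<longrightarrow> x \<bullet> (A *v x) > 0)}"

fun mpow :: "mat3 \<Rightarrow> nat \<Rightarrow> mat3" where
  "mpow A 0 = mat 1"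
| "mpow A (Suc k) = A ** mpow A k"

definition mexp :: "mat3 \<Rightarrow> mat3" where
  "mexp A = (\<Sum>k. (1 / fact k) *\<^sub>R mpow A k)"

definition mlog :: "mat3 \<Rightarrow> mat3" where
  "mlog U = (THE X. X \<in> Sym3 \<and> mexp X = U)"

definition dev3 :: "mat3 \<Rightarrow> mat3" where
  "dev3 X = X - (trace X / 3) *\<^sub>R mat 1"

end

theory Submission
  imports Defs
begin


lemma cauchy_lin:
  fixes f :: "real \<Rightarrow> 'a::real_normed_vector"
  assumes add: "\<And>s t. f (s+t) = f s + f t" and c: "continuous_on UNIV f"
  shows "f t = t *\<^sub>R f 1"
proof -
  have f0: "f 0 = 0" using add[of 0 0] by simp
  have fneg: "f (-s) = - f s" for s using add[of s "-s"] f0 by (simp add: eq_neg_iff_add_eq_0 add.commute)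
  have fnat: "f (of_nat n * s) = of_nat n *\<^sub>R f s" for n s
    by (induction n) (simp_all add: f0 distrib_right add scaleR_add_left)
  have fint: "f (of_int k * s) = of_int k *\<^sub>R f s" for k s
  proof (cases "k \<ge> 0")
    case True then obtain n where "k = int n" by (metis nonneg_eq_int)
    then show ?thesis using fnat by simp
  next
    case False then have "k = - int (nat (-k))" by simp
    then obtain n where "k = - int n" by blast
    then show ?thesis using fnat[of n s] fneg[of "of_nat n * s"] by simp
  qed
  have frat: "f q = q *\<^sub>R f 1" if qR: "q \<in> \<rat>" for q
  proof -
    obtain a b where b: "b > 0" "q = of_int a / of_int b" using Rats_cases'[OF qR] by metis
    have "of_int b *\<^sub>R f q = f (of_int b * q)" using fint by simp
    also have "of_int b * q = of_int a * 1" using b by simp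
    also have "f (of_int a * 1) = of_int a *\<^sub>R f 1" by (rule fint)
    finally have "of_int b *\<^sub>R f q = of_int a *\<^sub>R f 1" .
    then have "(1/of_int b) *\<^sub>R (of_int b *\<^sub>R f q) = (1/of_int b) *\<^sub>R (of_int a *\<^sub>R f 1)" by simp
    then show ?thesis using b by simp
  qed
  have cl: "closed {t. f t = t *\<^sub>R f 1}"
    by (rule closed_Collect_eq[OF c]) (intro continuous_intros)
  have "\<rat> \<subseteq> {t. f t = t *\<^sub>R f 1}" using frat by blast
  then have "closure \<rat> \<subseteq> {t. f t = t *\<^sub>R f 1}" using cl by (rule closure_minimal)
  then show ?thesis using Rats_closure_real by auto
qed



lemma sym_dot:
  fixes A :: "real^'n^'n"
  assumes "transpose A = A"
  shows "x \<bullet> (A *v y) = (A *v x) \<bullet> y"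
  by (metis assms dot_lmul_matrix transpose_matrix_vector)

lemma quad_nonpos_zero:
  fixes c d :: real
  assumes "\<And>t. 2*t*c + t^2*d \<le> 0"
  shows "c = 0"
proof -
  define e where "e = \<bar>d\<bar> + 1"
  have e: "e > 0" unfolding e_def by simp
  have "2*(c/e)*c + (c/e)^2*d \<le> 0" by (rule assms)
  moreover have "(2*(c/e)*c + (c/e)^2*d) = c^2*(2*e+d)/e^2" using e by (simp add: field_simps power2_eq_square)
  ultimately have "c^2*(2*e+d)/e^2 \<le> 0" by simp
  then have "c^2 * (2*e + d) \<le> 0" using e by (simp add: divide_le_0_iff)
  moreover have "2*e + d > 0" unfolding e_def by (cases "d \<ge> 0") auto
  ultimately have "c^2 \<le> 0" by (simp add: mult_le_0_iff)
  then show ?thesis by simp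
qed

lemma eig_subspace:
  fixes A :: "real^'n^'n"
  assumes sym: "transpose A = A" and S: "subspace S"
    and inv: "\<And>x. x \<in> S \<Longrightarrow> A *v x \<in> S" and x0: "x0 \<in> S" "x0 \<noteq> 0"
  shows "\<exists>v\<in>S. norm v = 1 \<and> A *v v = (v \<bullet> (A *v v)) *\<^sub>R v"
proof -
  let ?K = "S \<inter> sphere 0 1"
  let ?f = "\<lambda>y. y \<bullet> (A *v y)"
  have cK: "compact ?K" by (intro closed_Int_compact closed_subspace S compact_sphere)
  have "inverse (norm x0) *\<^sub>R x0 \<in> ?K" using x0 S by (simp add: subspace_mul)
  then have neK: "?K \<noteq> {}" by blast
  have cf: "continuous_on ?K ?f"
    by (intro continuous_intros)
  obtain v where vK: "v \<in> ?K" and vmax: "\<And>y. y \<in> ?K \<Longrightarrow> ?f y \<le> ?f v"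
    using continuous_attains_sup[OF cK neK cf] by blast
  define l where "l = ?f v"
  have vS: "v \<in> S" and vn: "norm v = 1" using vK by auto
  have vv: "v \<bullet> v = 1" using vn by (simp add: norm_eq_1)
  have key: "w \<bullet> (A *v v) = 0" if wS: "w \<in> S" and wv: "w \<bullet> v = 0" for w
  proof -
    define c where "c = w \<bullet> (A *v v)"
    define d where "d = w \<bullet> (A *v w) - l * (w \<bullet> w)"
    have "2*t*c + t^2*d \<le> 0" for t
    proof -
      define y where "y = v + t *\<^sub>R w"
      have yS: "y \<in> S" unfolding y_def using vS wS S by (simp add: subspace_add subspace_mul)
      have yy: "y \<bullet> y = 1 + t^2 * (w \<bullet> w)" unfolding y_def
        using vv wv by (simp add: inner_add_left inner_add_right inner_commute power2_eq_square)
      have ypos: "y \<bullet> y > 0" unfolding yy by (simp add: add_pos_nonneg)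
      have fy: "?f y = l + 2*t*c + t^2 * (w \<bullet> (A *v w))"
      proof -
        have "v \<bullet> (A *v w) = w \<bullet> (A *v v)" using sym_dot[OF sym, of v w] by (simp add: inner_commute)
        then show ?thesis unfolding y_def l_def c_def
          by (simp add: matrix_vector_right_distrib matrix_vector_mult_scaleR inner_add_left inner_add_right
              algebra_simps power2_eq_square)
      qed
      define z where "z = inverse (norm y) *\<^sub>R y"
      have ny: "norm y \<noteq> 0" using ypos by auto
      have "z \<in> ?K" unfolding z_def using yS S ny by (simp add: subspace_mul)
      then have "?f z \<le> l" unfolding l_def by (rule vmax)
      moreover have "?f z = ?f y / (y \<bullet> y)" unfolding z_def
        by (simp add: matrix_vector_mult_scaleR power2_norm_eq_inner[symmetric] power2_eq_square field_simps)
      ultimately have "?f y \<le> l * (y \<bullet> y)" using ypos by (simp add: divide_le_eq)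
      then show ?thesis unfolding fy yy d_def by (simp add: algebra_simps)
    qed
    then show ?thesis using quad_nonpos_zero c_def by blast
  qed
  define w where "w = A *v v - l *\<^sub>R v"
  have wS: "w \<in> S" unfolding w_def using inv[OF vS] vS S by (simp add: subspace_diff subspace_mul)
  have wv: "w \<bullet> v = 0" unfolding w_def l_def using vv by (simp add: inner_diff_left inner_diff_right inner_commute)
  have "w \<bullet> (A *v v) = 0" using key[OF wS wv] .
  then have "w \<bullet> w = 0" using wv unfolding w_def by (simp add: inner_diff_left inner_diff_right inner_commute)
  then have "w = 0" by simp
  then show ?thesis using vS vn unfolding w_def l_def by auto
qed



definition diag :: "real^'n \<Rightarrow> real^'n^'n" where
  "diag d = (\<chi> i j. if i = j then d$i else 0)"

lemma mult_transpose_entry: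
  fixes X Y :: "real^'n^'m"
  shows "(X ** transpose Y)$i$j = X$i \<bullet> Y$j"
  by (simp add: matrix_matrix_mult_def transpose_def inner_vec_def mult.commute)

lemma mult_row:
  fixes X :: "real^'n^'m" and Y :: "real^'k^'n"
  shows "(X ** Y)$i = X$i v* Y"
  by (simp add: vec_eq_iff matrix_matrix_mult_def vector_matrix_mult_def mult.commute)

lemma spectral3:
  fixes A :: mat3
  assumes sym: "transpose A = A"
  shows "\<exists>Q d. orthogonal_matrix Q \<and> A = transpose Q ** diag d ** Q"
proof -
  have ax: "axis 1 (1::real) \<noteq> (0::real^3)" by (simp add: vec_eq_iff axis_def)
  obtain v1 where v1: "norm v1 = 1" "A *v v1 = (v1 \<bullet> (A *v v1)) *\<^sub>R v1"
    using eig_subspace[OF sym subspace_UNIV _ UNIV_I ax] by blast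
  define l1 where "l1 = v1 \<bullet> (A *v v1)"
  have e1: "A *v v1 = l1 *\<^sub>R v1" using v1 l1_def by simp
  let ?S2 = "{x. v1 \<bullet> x = 0}"
  have inv2: "A *v x \<in> ?S2" if "x \<in> ?S2" for x
    using that sym_dot[OF sym, of v1 x] e1 by simp
  have "dim {v1} < DIM(real^3)" by simp
  then obtain x2 where x2: "x2 \<noteq> 0" "\<And>y. y \<in> span {v1} \<Longrightarrow> orthogonal x2 y"
    by (metis orthogonal_to_subspace_exists)
  have "x2 \<in> ?S2" using x2(2)[of v1] by (simp add: span_base orthogonal_def inner_commute)
  then obtain v2 where v2: "v2 \<in> ?S2" "norm v2 = 1" "A *v v2 = (v2 \<bullet> (A *v v2)) *\<^sub>R v2"
    using eig_subspace[OF sym subspace_hyperplane inv2 _ x2(1)] by blast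
  define l2 where "l2 = v2 \<bullet> (A *v v2)"
  have e2: "A *v v2 = l2 *\<^sub>R v2" using v2 l2_def by simp
  let ?S3 = "{x. v1 \<bullet> x = 0} \<inter> {x. v2 \<bullet> x = 0}"
  have sub3: "subspace ?S3" by (intro subspace_inter subspace_hyperplane)
  have inv3: "A *v x \<in> ?S3" if "x \<in> ?S3" for x
    using that sym_dot[OF sym, of v1 x] sym_dot[OF sym, of v2 x] e1 e2 by simp
  have "dim {v1, v2} \<le> card {v1, v2}" by (rule dim_le_card') simp
  also have "\<dots> \<le> 2" by (simp add: card_insert_if)
  finally have "dim {v1, v2} < DIM(real^3)" by simp
  then obtain x3 where x3: "x3 \<noteq> 0" "\<And>y. y \<in> span {v1, v2} \<Longrightarrow> orthogonal x3 y"
    by (metis orthogonal_to_subspace_exists)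
  have "x3 \<in> ?S3" using x3(2)[of v1] x3(2)[of v2] by (simp add: span_base orthogonal_def inner_commute)
  then obtain v3 where v3: "v3 \<in> ?S3" "norm v3 = 1" "A *v v3 = (v3 \<bullet> (A *v v3)) *\<^sub>R v3"
    using eig_subspace[OF sym sub3 inv3 _ x3(1)] by blast
  define l3 where "l3 = v3 \<bullet> (A *v v3)"
  have e3: "A *v v3 = l3 *\<^sub>R v3" using v3 l3_def by simp
  define Q :: mat3 where "Q = vector [v1, v2, v3]"
  define d :: "real^3" where "d = vector [l1, l2, l3]"
  have n1: "v1 \<bullet> v1 = 1" "v2 \<bullet> v2 = 1" "v3 \<bullet> v3 = 1" using v1 v2 v3 by (simp_all add: norm_eq_1)
  have o: "v1 \<bullet> v2 = 0" "v1 \<bullet> v3 = 0" "v2 \<bullet> v3 = 0" "v2 \<bullet> v1 = 0" "v3 \<bullet> v1 = 0" "v3 \<bullet> v2 = 0"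
    using v2 v3 by (auto simp: inner_commute)
  have QQ: "Q ** transpose Q = mat 1"
    by (simp add: vec_eq_iff forall_3 mult_transpose_entry Q_def n1 o mat_def)
  have QAQ: "Q ** A ** transpose Q = diag d"
  proof -
    have r: "(Q ** A)$i = A *v (Q$i)" for i
      by (metis mult_row sym transpose_matrix_vector)
    have q: "Q$1 = v1" "Q$2 = v2" "Q$3 = v3" by (simp_all add: Q_def)
    show ?thesis
      by (simp add: vec_eq_iff forall_3 mult_transpose_entry r q d_def diag_def e1 e2 e3 n1 o)
  qed
  have QQ': "transpose Q ** Q = mat 1" using QQ matrix_left_right_inverse by blast
  have "orthogonal_matrix Q" using QQ QQ' by (simp add: orthogonal_matrix_def)
  moreover have "A = transpose Q ** diag d ** Q"
  proof -
    have "transpose Q ** diag d ** Q = (transpose Q ** Q) ** A ** (transpose Q ** Q)"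
      unfolding QAQ[symmetric] by (simp add: matrix_mul_assoc)
    then show ?thesis using QQ' by simp
  qed
  ultimately show ?thesis by blast
qed



lemma ifmult:
  "(c::real) * (if P then d else 0) = (if P then c*d else 0)"
  "(if P then d else 0) * (c::real) = (if P then d*c else 0)"
  by simp_all

lemma diag_entry [simp]: "diag d $ i $ j = (if i = j then d$i else 0)"
  by (simp add: diag_def)

lemma mult_diag_right: "(X ** diag a)$i$j = X$i$j * a$j"
  by (simp add: matrix_matrix_mult_def ifmult sum.delta sum.delta')

lemma mult_diag_left: "(diag a ** X)$i$j = a$i * X$i$j"
  by (simp add: matrix_matrix_mult_def ifmult sum.delta sum.delta')

lemma diag_mult: "diag a ** diag b = diag (\<chi> i. a$i * b$i)"
  by (simp add: vec_eq_iff mult_diag_right)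

lemma mat1_diag: "mat 1 = diag (\<chi> i. 1)"
  by (simp add: vec_eq_iff mat_def)

lemma transpose_diag [simp]: "transpose (diag d) = diag d"
  by (simp add: vec_eq_iff transpose_def)

lemma trace_diag: "trace (diag d) = sum (\<lambda>i. d$i) UNIV"
  by (simp add: trace_def)

lemma mpow_diag: "mpow (diag d) k = diag (\<chi> i. d$i ^ k)"
  by (induction k) (simp_all add: mat1_diag diag_mult)

lemma diag_sum: "diag v = (\<Sum>i\<in>UNIV. (v$i) *\<^sub>R diag (axis i 1))"
  by (simp add: vec_eq_iff axis_def ifmult sum.delta sum.delta')

lemma mexp_diag_sums:
  "(\<lambda>k. (1 / fact k) *\<^sub>R mpow (diag d) k) sums diag (\<chi> i. exp (d$i))"
proof -
  have "(\<lambda>k. \<Sum>i\<in>UNIV. (d$i ^ k /\<^sub>R fact k) *\<^sub>R diag (axis i 1))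
          sums (\<Sum>i\<in>UNIV. exp (d$i) *\<^sub>R (diag (axis i 1) :: mat3))"
    by (intro sums_sum sums_scaleR_left exp_converges)
  moreover have "(1 / fact k) *\<^sub>R mpow (diag d) k =
      (\<Sum>i\<in>UNIV. (d$i ^ k /\<^sub>R fact k) *\<^sub>R diag (axis i 1))" for k
    by (simp add: mpow_diag vec_eq_iff axis_def divide_inverse mult.commute ifmult sum.delta sum.delta')
  moreover have "diag (\<chi> i. exp (d$i)) = (\<Sum>i\<in>UNIV. exp (d$i) *\<^sub>R (diag (axis i 1) :: mat3))"
    by (subst diag_sum) simp
  ultimately show ?thesis by simp
qed

lemma mexp_diag: "mexp (diag d) = diag (\<chi> i. exp (d$i))"
  unfolding mexp_def using mexp_diag_sums by (rule sums_unique[symmetric])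

lemma mpow_conj:
  assumes "orthogonal_matrix Q"
  shows "mpow (transpose Q ** X ** Q) k = transpose Q ** mpow X k ** Q"
proof (induction k)
  case 0 then show ?case using assms by (simp add: orthogonal_matrix_def)
next
  case (Suc k)
  have QQ: "Q ** transpose Q = mat 1" using assms by (simp add: orthogonal_matrix_def)
  have "mpow (transpose Q ** X ** Q) (Suc k) = transpose Q ** X ** (Q ** transpose Q) ** mpow X k ** Q"
    using Suc by (simp add: matrix_mul_assoc)
  then show ?case using QQ by (simp add: matrix_mul_assoc)
qed

lemma matrix_add_rdistrib: "((A::real^'n^'m) + B) ** C = A ** C + B ** C"
  by (simp add: vec_eq_iff matrix_matrix_mult_def sum.distrib distrib_right)

lemma conj_bounded_linear:
  fixes Q :: mat3
  shows "bounded_linear (\<lambda>M. transpose Q ** M ** Q)"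
proof -
  have "linear (\<lambda>M::mat3. transpose Q ** M ** Q)"
    by (rule linearI) (simp_all add: matrix_add_ldistrib matrix_add_rdistrib matrix_scalar_ac scalar_matrix_assoc)
  then show ?thesis by (simp add: linear_conv_bounded_linear)
qed

lemma mexp_conj_diag:
  assumes "orthogonal_matrix Q"
  shows "mexp (transpose Q ** diag d ** Q) = transpose Q ** diag (\<chi> i. exp (d$i)) ** Q"
proof -
  have "(\<lambda>k. transpose Q ** ((1 / fact k) *\<^sub>R mpow (diag d) k) ** Q)
          sums (transpose Q ** diag (\<chi> i. exp (d$i)) ** Q)"
    by (rule bounded_linear.sums[OF conj_bounded_linear mexp_diag_sums])
  moreover have "transpose Q ** ((1 / fact k) *\<^sub>R mpow (diag d) k) ** Q
     = (1 / fact k) *\<^sub>R mpow (transpose Q ** diag d ** Q) k" for k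
    using mpow_conj[OF assms] by (simp add: matrix_scalar_ac scalar_matrix_assoc)
  ultimately show ?thesis unfolding mexp_def by (simp add: sums_unique[symmetric])
qed



lemma conj_diag_unique:
  fixes P Q :: mat3
  assumes P: "orthogonal_matrix P" and Q: "orthogonal_matrix Q"
    and eq: "transpose P ** diag (\<chi> i. exp (e$i)) ** P = transpose Q ** diag (\<chi> i. exp (d$i)) ** Q"
  shows "transpose P ** diag e ** P = transpose Q ** diag d ** Q"
proof -
  have PP: "P ** transpose P = mat 1" "transpose P ** P = mat 1" using P by (auto simp: orthogonal_matrix_def)
  have QQ: "Q ** transpose Q = mat 1" "transpose Q ** Q = mat 1" using Q by (auto simp: orthogonal_matrix_def)
  define R where "R = Q ** transpose P"
  define ee :: "real^3" where "ee = (\<chi> i. exp (e$i))"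
  define ed :: "real^3" where "ed = (\<chi> i. exp (d$i))"
  have "R ** diag ee = Q ** transpose P ** diag ee ** (P ** transpose P)"
    using PP unfolding R_def by simp
  also have "\<dots> = Q ** (transpose P ** diag ee ** P) ** transpose P" by (simp add: matrix_mul_assoc)
  also have "\<dots> = Q ** (transpose Q ** diag ed ** Q) ** transpose P" using eq ee_def ed_def by simp
  also have "\<dots> = (Q ** transpose Q) ** diag ed ** (Q ** transpose P)" by (simp add: matrix_mul_assoc)
  also have "\<dots> = diag ed ** R" using QQ unfolding R_def by simp
  finally have RE: "R ** diag ee = diag ed ** R" .
  have RE2: "R ** diag e = diag d ** R"
  proof -
    have "R$i$j * e$j = d$i * R$i$j" for i j
    proof (cases "R$i$j = 0")
      case True then show ?thesis by simp
    next
      case False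
      have "(R ** diag ee)$i$j = (diag ed ** R)$i$j" using RE by simp
      then have "R$i$j * exp (e$j) = exp (d$i) * R$i$j"
        by (simp add: mult_diag_left mult_diag_right ee_def ed_def)
      then have "exp (e$j) = exp (d$i)" using False by (simp add: mult.commute)
      then show ?thesis by simp
    qed
    then show ?thesis by (simp add: vec_eq_iff mult_diag_left mult_diag_right)
  qed
  have RP: "R ** P = Q" using PP unfolding R_def by (simp add: matrix_mul_assoc[symmetric])
  have QR: "transpose Q ** R = transpose P" using QQ unfolding R_def by (simp add: matrix_mul_assoc)
  have "transpose Q ** diag d ** Q = transpose Q ** (diag d ** R) ** P"
    using RP by (simp add: matrix_mul_assoc[symmetric])
  also have "\<dots> = transpose Q ** (R ** diag e) ** P" using RE2 by simp
  also have "\<dots> = (transpose Q ** R) ** diag e ** P" by (simp add: matrix_mul_assoc)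
  also have "\<dots> = transpose P ** diag e ** P" using QR by simp
  finally show ?thesis by (rule sym)
qed

lemma conj_sym: "transpose (transpose Q ** diag d ** Q) = transpose Q ** diag d ** (Q::mat3)"
  by (simp only: matrix_transpose_mul transpose_transpose transpose_diag matrix_mul_assoc)

lemma mlog_conj:
  fixes Q :: mat3
  assumes Q: "orthogonal_matrix Q"
  shows "mlog (transpose Q ** diag (\<chi> i. exp (d$i)) ** Q) = transpose Q ** diag d ** Q"
  unfolding mlog_def
proof (rule the_equality)
  have "transpose Q ** diag d ** Q \<in> Sym3" unfolding Sym3_def using conj_sym by blast
  then show "transpose Q ** diag d ** Q \<in> Sym3 \<and>
    mexp (transpose Q ** diag d ** Q) = transpose Q ** diag (\<chi> i. exp (d$i)) ** Q"
    using mexp_conj_diag[OF Q] by blast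
next
  fix X assume X: "X \<in> Sym3 \<and> mexp X = transpose Q ** diag (\<chi> i. exp (d$i)) ** Q"
  then have "transpose X = X" unfolding Sym3_def by blast
  from spectral3[OF this] obtain P e where P: "orthogonal_matrix P" "X = transpose P ** diag e ** P"
    by blast
  have "transpose P ** diag (\<chi> i. exp (e$i)) ** P = mexp X"
    unfolding P(2) by (rule mexp_conj_diag[OF P(1), symmetric])
  also have "\<dots> = transpose Q ** diag (\<chi> i. exp (d$i)) ** Q" using X by blast
  finally have "transpose P ** diag e ** P = transpose Q ** diag d ** Q"
    by (rule conj_diag_unique[OF P(1) Q])
  then show "X = transpose Q ** diag d ** Q" using P(2) by simp
qed



definition dexp :: "real^3 \<Rightarrow> mat3" where "dexp x = diag (\<chi> i. exp (x$i))"

lemma diag_mulv: "diag v *v y = (\<chi> i. v$i * y$i)"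
  by (simp add: vec_eq_iff matrix_vector_mult_def ifmult sum.delta sum.delta')

lemma diag_psym:
  fixes v :: "real^3"
  assumes pos: "\<And>i. v$i > 0"
  shows "diag v \<in> PSym3"
proof -
  have "x \<bullet> (diag v *v x) > 0" if "x \<noteq> 0" for x :: "real^3"
  proof -
    have nz: "x$1 \<noteq> 0 \<or> x$2 \<noteq> 0 \<or> x$3 \<noteq> 0" using that by (auto simp: vec_eq_iff forall_3)
    have t0: "0 \<le> x$i * (v$i * x$i)" for i
      using pos[of i] by (metis mult.left_commute mult_nonneg_nonneg less_le zero_le_square)
    have t1: "0 < x$i * (v$i * x$i)" if "x$i \<noteq> 0" for i
      using pos[of i] that by (metis mult.left_commute mult_pos_pos not_real_square_gt_zero)
    have "x \<bullet> (diag v *v x) = x$1 * (v$1 * x$1) + x$2 * (v$2 * x$2) + x$3 * (v$3 * x$3)"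
      by (simp add: diag_mulv inner_vec_def sum_3)
    then show ?thesis using nz t0[of 1] t0[of 2] t0[of 3] t1[of 1] t1[of 2] t1[of 3] by auto
  qed
  then show ?thesis by (simp add: PSym3_def)
qed

lemma dexp_psym: "dexp x \<in> PSym3"
  unfolding dexp_def by (rule diag_psym) simp

lemma dexp_add: "dexp (x + y) = dexp x ** dexp y"
  by (simp add: dexp_def diag_mult exp_add)

lemma dexp_comm: "dexp x ** dexp y = dexp y ** dexp x"
  by (metis add.commute dexp_add)

lemma dexp_cont: "continuous_on UNIV dexp"
proof -
  have eq: "dexp = (\<lambda>x. \<Sum>i\<in>UNIV. exp (x$i) *\<^sub>R diag (axis i 1))"
    by (rule ext, simp add: dexp_def, subst diag_sum) simp
  show ?thesis unfolding eq by (intro continuous_intros)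
qed

lemma psym_spectral:
  assumes U: "U \<in> PSym3"
  shows "\<exists>Q u. orthogonal_matrix Q \<and> U = transpose Q ** diag u ** Q \<and> (\<forall>i. u$i > 0)"
proof -
  have "transpose U = U" using U by (simp add: PSym3_def)
  from spectral3[OF this] obtain Q u where Q: "orthogonal_matrix Q" "U = transpose Q ** diag u ** Q" by blast
  have QQ: "Q ** transpose Q = mat 1" using Q by (simp add: orthogonal_matrix_def)
  have "u$i > 0" for i
  proof -
    define e :: "real^3" where "e = axis i 1"
    define x where "x = transpose Q *v e"
    have Qx: "Q *v x = e" unfolding x_def by (simp del: transpose_matrix_vector add: matrix_vector_mul_assoc QQ)
    have "e \<noteq> 0" unfolding e_def by (simp add: vec_eq_iff axis_def)
    then have "x \<noteq> 0" using Qx by auto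
    then have pos: "x \<bullet> (U *v x) > 0" using U by (simp add: PSym3_def)
    have "U *v x = transpose Q *v (diag u *v e)"
      using Q(2) Qx by (simp del: transpose_matrix_vector add: matrix_vector_mul_assoc[symmetric])
    then have "x \<bullet> (U *v x) = e \<bullet> (Q *v (transpose Q *v (diag u *v e)))"
      by (simp add: x_def dot_lmul_matrix[symmetric])
    also have "\<dots> = e \<bullet> (diag u *v e)"
      by (simp del: transpose_matrix_vector add: matrix_vector_mul_assoc matrix_mul_assoc QQ)
    also have "\<dots> = u$i" by (simp add: e_def diag_mulv inner_vec_def axis_def ifmult sum.delta sum.delta')
    finally show ?thesis using pos by simp
  qed
  then show ?thesis using Q by blast
qed



definition P12 :: mat3 where "P12 = vector [vector [0,1,0], vector [1,0,0], vector [0,0,1]]"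
definition P13 :: mat3 where "P13 = vector [vector [0,0,1], vector [0,1,0], vector [1,0,0]]"
definition P23 :: mat3 where "P23 = vector [vector [1,0,0], vector [0,0,1], vector [0,1,0]]"

lemmas Pdefs = P12_def P13_def P23_def

lemma P_orth: "orthogonal_matrix P12" "orthogonal_matrix P13" "orthogonal_matrix P23"
  by (simp_all add: Pdefs orthogonal_matrix_def vec_eq_iff forall_3 sum_3 matrix_matrix_mult_def transpose_def mat_def)

lemma P_dexp:
  "transpose P12 ** dexp (axis 1 1) ** P12 = dexp (axis 2 1)"
  "transpose P13 ** dexp (axis 1 1) ** P13 = dexp (axis 3 1)"
  "transpose P23 ** dexp (axis 1 1) ** P23 = dexp (axis 1 1)"
  by (simp_all add: dexp_def Pdefs vec_eq_iff forall_3 sum_3 matrix_matrix_mult_def transpose_def axis_def)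

lemma P_entries:
  "(transpose P12 ** M ** P12)$1$1 = M$2$2" "(transpose P12 ** M ** P12)$2$2 = M$1$1"
  "(transpose P12 ** M ** P12)$3$3 = M$3$3"
  "(transpose P13 ** M ** P13)$1$1 = M$3$3" "(transpose P13 ** M ** P13)$2$2 = M$2$2"
  "(transpose P13 ** M ** P13)$3$3 = M$1$1"
  "(transpose P23 ** M ** P23)$2$2 = M$3$3"
  by (simp_all add: Pdefs sum_3 matrix_matrix_mult_def transpose_def)

theorem mainTheorem9:
  fixes T :: "mat3 \<Rightarrow> mat3"
  assumes range: "\<And>U. U \<in> PSym3 \<Longrightarrow> T U \<in> Sym3"
    and cont: "continuous_on PSym3 T"
    and iso: "\<And>Q U. orthogonal_matrix Q \<Longrightarrow> U \<in> PSym3 \<Longrightarrow>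
                 T (transpose Q ** U ** Q) = transpose Q ** T U ** Q"
    and zero: "\<And>U. U \<in> PSym3 \<Longrightarrow> (T U = 0 \<longleftrightarrow> U = mat 1)"
    and add: "\<And>U1 U2. U1 \<in> PSym3 \<Longrightarrow> U2 \<in> PSym3 \<Longrightarrow> U1 ** U2 = U2 ** U1 \<Longrightarrow>
                 T (U1 ** U2) = T U1 + T U2"
  shows "(\<exists>G \<Lambda>::real. G \<noteq> 0 \<and> 3 * \<Lambda> + 2 * G \<noteq> 0 \<and>
            (\<forall>U \<in> PSym3. T U = (2 * G) *\<^sub>R mlog U + (\<Lambda> * trace (mlog U)) *\<^sub>R mat 1))
       \<and> (\<exists>G K::real. G \<noteq> 0 \<and> K \<noteq> 0 \<and>
            (\<forall>U \<in> PSym3. T U = (2 * G) *\<^sub>R dev3 (mlog U) + (K * trace (mlog U)) *\<^sub>R mat 1))"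
proof -
  define h where "h x = T (dexp x)" for x
  have hadd: "h (x + y) = h x + h y" for x y
    unfolding h_def dexp_add by (rule add[OF dexp_psym dexp_psym dexp_comm])
  have hcont: "continuous_on UNIV h"
    unfolding h_def[abs_def]
    by (rule continuous_on_compose2[OF cont dexp_cont]) (auto intro: dexp_psym)
  have hscale: "h (t *\<^sub>R v) = t *\<^sub>R h v" for t v
  proof -
    have "(\<lambda>t. h (t *\<^sub>R v)) t = t *\<^sub>R (\<lambda>t. h (t *\<^sub>R v)) 1"
    proof (rule cauchy_lin)
      show "h ((s + t) *\<^sub>R v) = h (s *\<^sub>R v) + h (t *\<^sub>R v)" for s t
        by (simp add: scaleR_add_left hadd)
      show "continuous_on UNIV (\<lambda>t. h (t *\<^sub>R v))"
        by (rule continuous_on_compose2[OF hcont]) (auto intro: continuous_intros)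
    qed
    then show ?thesis by simp
  qed
  define e1 :: "real^3" where "e1 = axis 1 1"
  define e2 :: "real^3" where "e2 = axis 2 1"
  define e3 :: "real^3" where "e3 = axis 3 1"
  have hlin: "h x = x$1 *\<^sub>R h e1 + x$2 *\<^sub>R h e2 + x$3 *\<^sub>R h e3" for x
  proof -
    have "x = x$1 *\<^sub>R e1 + x$2 *\<^sub>R e2 + x$3 *\<^sub>R e3"
      by (simp add: vec_eq_iff forall_3 e1_def e2_def e3_def axis_def)
    then have "h x = h (x$1 *\<^sub>R e1 + x$2 *\<^sub>R e2 + x$3 *\<^sub>R e3)" by simp
    then show ?thesis by (simp add: hadd hscale)
  qed
  have offdiag: "h x $ i $ j = 0" if ij: "i \<noteq> j" for x i j
  proof -
    define s :: "real^3" where "s = (\<chi> k. if k = i then -1 else 1)"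
    have ss: "(\<chi> k. s$k * s$k) = (\<chi> k. (1::real))" by (simp add: s_def vec_eq_iff)
    have S: "orthogonal_matrix (diag s)"
      by (simp add: orthogonal_matrix_def diag_mult ss mat1_diag)
    have "transpose (diag s) ** dexp x ** diag s = diag (\<chi> k. s$k * exp (x$k) * s$k)"
      by (simp add: dexp_def diag_mult)
    also have "\<dots> = dexp x" by (simp add: dexp_def s_def vec_eq_iff)
    finally have "h x = transpose (diag s) ** h x ** diag s"
      using iso[OF S dexp_psym, of x] unfolding h_def by simp
    then have "h x $ i $ j = (transpose (diag s) ** h x ** diag s) $ i $ j" by simp
    also have "\<dots> = - h x $ i $ j" using ij by (simp add: mult_diag_left mult_diag_right s_def)
    finally show ?thesis by simp
  qed
  have perm1: "h (axis 2 1) = transpose P12 ** h (axis 1 1) ** P12"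
    unfolding h_def using iso[OF P_orth(1) dexp_psym, of "axis 1 1"] by (simp add: P_dexp)
  have perm2: "h (axis 3 1) = transpose P13 ** h (axis 1 1) ** P13"
    unfolding h_def using iso[OF P_orth(2) dexp_psym, of "axis 1 1"] by (simp add: P_dexp)
  have perm3: "h (axis 1 1) = transpose P23 ** h (axis 1 1) ** P23"
    unfolding h_def using iso[OF P_orth(3) dexp_psym, of "axis 1 1"] by (simp add: P_dexp)
  note perm = perm1 perm2 perm3
  define \<alpha> where "\<alpha> = h e1 $ 1 $ 1"
  define \<beta> where "\<beta> = h e1 $ 2 $ 2"
  have ent: "h e1 $ 3 $ 3 = \<beta>" "h e2 $ 1 $ 1 = \<beta>" "h e2 $ 2 $ 2 = \<alpha>" "h e2 $ 3 $ 3 = \<beta>"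
    "h e3 $ 1 $ 1 = \<beta>" "h e3 $ 2 $ 2 = \<beta>" "h e3 $ 3 $ 3 = \<alpha>"
    using P_entries[of "h e1"] perm unfolding \<alpha>_def \<beta>_def e1_def e2_def e3_def by metis+
  have od: "h e $ 1 $ 2 = 0" "h e $ 1 $ 3 = 0" "h e $ 2 $ 1 = 0" "h e $ 2 $ 3 = 0"
     "h e $ 3 $ 1 = 0" "h e $ 3 $ 2 = 0" for e
    by (simp_all add: offdiag)
  have hform: "h x = (\<alpha> - \<beta>) *\<^sub>R diag x + (\<beta> * (x$1 + x$2 + x$3)) *\<^sub>R mat 1" for x
    unfolding hlin[of x]
    by (simp add: vec_eq_iff forall_3 ent od mat_def \<alpha>_def[symmetric] \<beta>_def[symmetric] algebra_simps)
  have dexp_ne: "T (dexp x) \<noteq> 0" if "x$1 = 1" for x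
  proof
    assume "T (dexp x) = 0"
    then have "dexp x = mat 1" using zero[OF dexp_psym] by blast
    then have "dexp x $ 1 $ 1 = 1" by (simp add: mat_def)
    then show False using that by (simp add: dexp_def)
  qed
  have Gnz: "\<alpha> - \<beta> \<noteq> 0"
  proof
    assume ab: "\<alpha> - \<beta> = 0"
    have "h (vector [1, -1, 0]) = 0" unfolding hform ab by simp
    then show False using dexp_ne[of "vector [1, -1, 0]"] unfolding h_def by simp
  qed
  have Knz: "\<alpha> + 2 * \<beta> \<noteq> 0"
  proof
    assume ab: "\<alpha> + 2 * \<beta> = 0"
    have "h (vector [1, 1, 1]) = 0" unfolding hform
      using ab by (simp add: vec_eq_iff forall_3 mat_def algebra_simps)
    then show False using dexp_ne[of "vector [1, 1, 1]"] unfolding h_def by simp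
  qed
  have main: "T U = (\<alpha> - \<beta>) *\<^sub>R mlog U + (\<beta> * trace (mlog U)) *\<^sub>R mat 1" if U: "U \<in> PSym3" for U
  proof -
    obtain Q u where Q: "orthogonal_matrix Q" "U = transpose Q ** diag u ** Q" "\<forall>i. u$i > 0"
      using psym_spectral[OF U] by blast
    have QQ: "transpose Q ** Q = mat 1" using Q by (simp add: orthogonal_matrix_def)
    define d :: "real^3" where "d = (\<chi> i. ln (u$i))"
    have du: "dexp d = diag u" using Q(3) by (simp add: dexp_def d_def vec_eq_iff)
    have Ud: "U = transpose Q ** dexp d ** Q" using Q(2) du by simp
    have ml: "mlog U = transpose Q ** diag d ** Q"
      using mlog_conj[OF Q(1), of d] Ud by (simp add: dexp_def)
    have tr: "trace (mlog U) = d$1 + d$2 + d$3"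
    proof -
      have "trace (mlog U) = trace ((transpose Q ** diag d) ** Q)" using ml by simp
      also have "\<dots> = trace (Q ** (transpose Q ** diag d))" by (rule trace_mul_sym)
      also have "\<dots> = trace ((Q ** transpose Q) ** diag d)" by (simp add: matrix_mul_assoc)
      also have "\<dots> = d$1 + d$2 + d$3" using Q(1) by (simp add: orthogonal_matrix_def trace_diag sum_3)
      finally show ?thesis .
    qed
    have "T U = transpose Q ** h d ** Q" using iso[OF Q(1) dexp_psym, of d] Ud h_def by simp
    also have "\<dots> = transpose Q ** ((\<alpha> - \<beta>) *\<^sub>R diag d + (\<beta> * (d$1 + d$2 + d$3)) *\<^sub>R mat 1) ** Q"
      by (simp add: hform)
    also have "\<dots> = (\<alpha> - \<beta>) *\<^sub>R (transpose Q ** diag d ** Q) + (\<beta> * (d$1 + d$2 + d$3)) *\<^sub>R (transpose Q ** Q)"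
      by (simp add: matrix_add_ldistrib matrix_add_rdistrib matrix_scalar_ac scalar_matrix_assoc)
    also have "\<dots> = (\<alpha> - \<beta>) *\<^sub>R mlog U + (\<beta> * trace (mlog U)) *\<^sub>R mat 1"
      using ml tr QQ by simp
    finally show ?thesis .
  qed
  have part1: "\<exists>G \<Lambda>::real. G \<noteq> 0 \<and> 3 * \<Lambda> + 2 * G \<noteq> 0 \<and>
            (\<forall>U \<in> PSym3. T U = (2 * G) *\<^sub>R mlog U + (\<Lambda> * trace (mlog U)) *\<^sub>R mat 1)"
  proof (rule exI[of _ "(\<alpha> - \<beta>) / 2"], rule exI[of _ \<beta>], intro conjI ballI)
    show "(\<alpha> - \<beta>) / 2 \<noteq> 0" using Gnz by simp
    show "3 * \<beta> + 2 * ((\<alpha> - \<beta>) / 2) \<noteq> 0" using Knz by (simp add: field_simps)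
    fix U assume U: "U \<in> PSym3"
    show "T U = (2 * ((\<alpha> - \<beta>) / 2)) *\<^sub>R mlog U + (\<beta> * trace (mlog U)) *\<^sub>R mat 1"
      using main[OF U] by simp
  qed
  have part2: "\<exists>G K::real. G \<noteq> 0 \<and> K \<noteq> 0 \<and>
            (\<forall>U \<in> PSym3. T U = (2 * G) *\<^sub>R dev3 (mlog U) + (K * trace (mlog U)) *\<^sub>R mat 1)"
  proof (rule exI[of _ "(\<alpha> - \<beta>) / 2"], rule exI[of _ "(\<alpha> + 2 * \<beta>) / 3"], intro conjI ballI)
    show "(\<alpha> - \<beta>) / 2 \<noteq> 0" using Gnz by simp
    show "(\<alpha> + 2 * \<beta>) / 3 \<noteq> 0" using Knz by simp
    fix U assume U: "U \<in> PSym3"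
    show "T U = (2 * ((\<alpha> - \<beta>) / 2)) *\<^sub>R dev3 (mlog U) + ((\<alpha> + 2 * \<beta>) / 3 * trace (mlog U)) *\<^sub>R mat 1"
      unfolding main[OF U] dev3_def
      by (simp add: vec_eq_iff field_simps)
  qed
  show ?thesis using part1 part2 by blast
qed

end
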